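(* Let $\mathcal{P}$ be a Prob-solvable loop with program variables $x_1,\ldots,x_m$, and let $M=\prod_{i=1}^m x_i^{\alpha_i}$ be any monomial (with $\alpha_i\in\mathbb{N}$) in the program variables. Then the sequence of expected values $E[M(n)]$, $n\ge 0$, is modeled by C-finite recurrences over E-variables: there is a finite set $\mathcal{S}$ of monomials in $x_1,\ldots,x_m$ containing $M$ such that, for every $N\in\mathcal{S}$, $E[N(n+1)]$ equals a linear combination, with constant coefficients, of the E-variables $E[N'(n)]$, $N'\in\mathcal{S}$, plus a constant. In particular higher-order (and mixed) moments of the program variables satisfy a system of linear recurrences with constant coefficients.
   Context: A Prob-solvable loop consists of an initialization assigning initial values (constants) to program variables $x_1,\ldots,x_m$, followed by a loop \texttt{while true do} whose body updates the variables in order $x_1,\ldots,x_m$ by probabilistic assignments of the form $x_i := a_i x_i + P_i(x_1,\ldots,x_{i-1})$ with probability $p_i$, and $x_i := b_i x_i + Q_i(x_1,\ldots,x_{i-1})$ with probability $1-p_i$, where $a_i,b_i$ are constants, $p_i\in[0,1]$, and $P_i,Q_i$ are polynomials in the already-updated variables $x_1,\ldots,x_{i-1}$ (i.e. their values in the current iteration) whose coefficients are constants or random variables drawn independently (e.g. uniformly from a fixed interval, such as \texttt{rand}$(a,b)$) with known constant moments, independent of the program state. The probabilistic choices in each iteration are independent. For $n\ge 0$, $x_i(n)$ denotes the random variable giving the value of $x_i$ after $n$ loop iterations, and for a monomial $M=\prod x_i^{\alpha_i}$, $M(n)=\prod x_i(n)^{\alpha_i}$. An E-variable is an expression $E[M(n)]$,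 the expected value of a monomial in the program variables at iteration $n$. A C-finite recurrence is a linear recurrence with constant coefficients. *)

theory Defs
  imports "HOL-Probability.Probability"
begin

text \<open>A Prob-solvable loop with program variables x_0, ..., x_(m-1) (0-based).
  A polynomial in the already-updated variables is a finite list of terms;
  each term is (D, alpha): a coefficient drawn from distribution D (a Dirac
  measure for a constant coefficient) times the monomial with exponent vector alpha.\<close>

type_synonym rpoly = "(real measure \<times> (nat \<Rightarrow> nat)) list"

record probloop =
  nvars :: nat
  init  :: "nat \<Rightarrow> real"
  pr    :: "nat \<Rightarrow> real"
  ca    :: "nat \<Rightarrow> real"
  cb    :: "nat \<Rightarrow> real"
  polP  :: "nat \<Rightarrow> rpoly"
  polQ  :: "nat \<Rightarrow> rpoly"

definition pol :: "probloop \<Rightarrow> bool \<Rightarrow> nat \<Rightarrow> rpoly" where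
  "pol L br i = (if br then polP L i else polQ L i)"

definition prob_solvable :: "probloop \<Rightarrow> bool" where
  "prob_solvable L \<longleftrightarrow>
     (\<forall>i < nvars L. 0 \<le> pr L i \<and> pr L i \<le> 1) \<and>
     (\<forall>i < nvars L. \<forall>br k. k < length (pol L br i) \<longrightarrow>
        (\<forall>j. j \<ge> i \<longrightarrow> snd (pol L br i ! k) j = 0) \<and>
        prob_space (fst (pol L br i ! k)) \<and>
        sets (fst (pol L br i ! k)) = sets borel \<and>
        (\<forall>e::nat. integrable (fst (pol L br i ! k)) (\<lambda>x. x ^ e)))"

definition mon_eval :: "nat \<Rightarrow> (nat \<Rightarrow> nat) \<Rightarrow> (nat \<Rightarrow> real) \<Rightarrow> real" where
  "mon_eval m \<alpha> s = (\<Prod>j<m. s j ^ \<alpha> j)"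

definition poly_eval :: "nat \<Rightarrow> rpoly \<Rightarrow> (nat \<Rightarrow> real) \<Rightarrow> (nat \<Rightarrow> real) \<Rightarrow> real" where
  "poly_eval m ps c s = (\<Sum>k<length ps. c k * mon_eval m (snd (ps ! k)) s)"

text \<open>Random sources: B n i \<omega> is the probabilistic choice for x_i in iteration n
  (True = first branch), C n i br k \<omega> is the k-th coefficient of the polynomial
  of branch br of x_i in iteration n.\<close>

fun body :: "probloop \<Rightarrow> (nat \<Rightarrow> nat \<Rightarrow> 'a \<Rightarrow> bool) \<Rightarrow> (nat \<Rightarrow> nat \<Rightarrow> bool \<Rightarrow> nat \<Rightarrow> 'a \<Rightarrow> real)
    \<Rightarrow> nat \<Rightarrow> 'a \<Rightarrow> (nat \<Rightarrow> real) \<Rightarrow> nat \<Rightarrow> (nat \<Rightarrow> real)" where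
  "body L B C n \<omega> s 0 = s"
| "body L B C n \<omega> s (Suc i) =
     (let t = body L B C n \<omega> s i in
      t(i := (if B n i \<omega>
              then ca L i * t i + poly_eval (nvars L) (polP L i) (\<lambda>k. C n i True k \<omega>) t
              else cb L i * t i + poly_eval (nvars L) (polQ L i) (\<lambda>k. C n i False k \<omega>) t)))"

fun loop_state :: "probloop \<Rightarrow> (nat \<Rightarrow> nat \<Rightarrow> 'a \<Rightarrow> bool) \<Rightarrow> (nat \<Rightarrow> nat \<Rightarrow> bool \<Rightarrow> nat \<Rightarrow> 'a \<Rightarrow> real)
    \<Rightarrow> nat \<Rightarrow> 'a \<Rightarrow> (nat \<Rightarrow> real)" where
  "loop_state L B C 0 \<omega> = init L"
| "loop_state L B C (Suc n) \<omega> = body L B C n \<omega> (loop_state L B C n \<omega>) (nvars L)"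

datatype ridx = Ch nat nat | Cf nat nat bool nat

definition src :: "(nat \<Rightarrow> nat \<Rightarrow> 'a \<Rightarrow> bool) \<Rightarrow> (nat \<Rightarrow> nat \<Rightarrow> bool \<Rightarrow> nat \<Rightarrow> 'a \<Rightarrow> real)
    \<Rightarrow> ridx \<Rightarrow> 'a \<Rightarrow> real" where
  "src B C r = (case r of Ch n i \<Rightarrow> (\<lambda>\<omega>. of_bool (B n i \<omega>)) | Cf n i br k \<Rightarrow> C n i br k)"

definition src_idx :: "probloop \<Rightarrow> ridx set" where
  "src_idx L = {Ch n i | n i. i < nvars L} \<union>
               {Cf n i br k | n i br k. i < nvars L \<and> k < length (pol L br i)}"

definition loop_sources :: "'a measure \<Rightarrow> probloop \<Rightarrow> (nat \<Rightarrow> nat \<Rightarrow> 'a \<Rightarrow> bool)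
    \<Rightarrow> (nat \<Rightarrow> nat \<Rightarrow> bool \<Rightarrow> nat \<Rightarrow> 'a \<Rightarrow> real) \<Rightarrow> bool" where
  "loop_sources M L B C \<longleftrightarrow>
     prob_space.indep_vars M (\<lambda>_. borel) (src B C) (src_idx L) \<and>
     (\<forall>n i. i < nvars L \<longrightarrow> measure M {\<omega> \<in> space M. B n i \<omega>} = pr L i) \<and>
     (\<forall>n i br k. i < nvars L \<and> k < length (pol L br i) \<longrightarrow>
        distr M borel (C n i br k) = fst (pol L br i ! k))"

definition Evar :: "'a measure \<Rightarrow> probloop \<Rightarrow> (nat \<Rightarrow> nat \<Rightarrow> 'a \<Rightarrow> bool)
    \<Rightarrow> (nat \<Rightarrow> nat \<Rightarrow> bool \<Rightarrow> nat \<Rightarrow> 'a \<Rightarrow> real) \<Rightarrow> (nat \<Rightarrow> nat) \<Rightarrow> nat \<Rightarrow> real" where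
  "Evar M L B C \<beta> n = (\<integral>\<omega>. mon_eval (nvars L) \<beta> (loop_state L B C n \<omega>) \<partial>M)"

end

theory Submission
  imports Defs "HOL-Library.Function_Algebras"
begin

datatype sidx = SB nat | SC nat bool nat

type_synonym mpoly = "(real \<times> (sidx \<Rightarrow> nat) \<times> (nat \<Rightarrow> nat)) list"

definition smon :: "sidx set \<Rightarrow> (sidx \<Rightarrow> nat) \<Rightarrow> (sidx \<Rightarrow> real) \<Rightarrow> real" where
  "smon I g v = (\<Prod>s\<in>I. v s ^ g s)"

definition peval :: "sidx set \<Rightarrow> nat \<Rightarrow> mpoly \<Rightarrow> (sidx \<Rightarrow> real) \<Rightarrow> (nat \<Rightarrow> real) \<Rightarrow> real" where
  "peval I m p v x = (\<Sum>t\<leftarrow>p. fst t * smon I (fst (snd t)) v * mon_eval m (snd (snd t)) x)"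

definition pmul :: "mpoly \<Rightarrow> mpoly \<Rightarrow> mpoly" where
  "pmul p q = concat (map (\<lambda>a. map (\<lambda>b. (fst a * fst b, fst (snd a) + fst (snd b), snd (snd a) + snd (snd b))) q) p)"

definition pconst :: "real \<Rightarrow> mpoly" where "pconst c = [(c, \<lambda>_. 0, \<lambda>_. 0)]"
definition pvar :: "nat \<Rightarrow> mpoly" where "pvar j = [(1, \<lambda>_. 0, (\<lambda>_. 0)(j := 1))]"
definition psrc :: "sidx \<Rightarrow> mpoly" where "psrc s = [(1, (\<lambda>_. 0)(s := 1), \<lambda>_. 0)]"

fun ppow :: "mpoly \<Rightarrow> nat \<Rightarrow> mpoly" where
  "ppow p 0 = pconst 1"
| "ppow p (Suc e) = pmul p (ppow p e)"

fun pmonp :: "(nat \<Rightarrow> mpoly) \<Rightarrow> nat \<Rightarrow> (nat \<Rightarrow> nat) \<Rightarrow> mpoly" where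
  "pmonp e 0 a = pconst 1"
| "pmonp e (Suc j) a = pmul (pmonp e j a) (ppow (e j) (a j))"

fun psumk :: "nat \<Rightarrow> (nat \<Rightarrow> mpoly) \<Rightarrow> mpoly" where
  "psumk 0 f = []"
| "psumk (Suc k) f = psumk k f @ f k"

lemma smon_add: "smon I (\<lambda>s. g1 s + g2 s) v = smon I g1 v * smon I g2 v"
  by (simp add: smon_def power_add prod.distrib)

lemma mon_add: "mon_eval m (\<lambda>s. b1 s + b2 s) x = mon_eval m b1 x * mon_eval m b2 x"
  by (simp add: mon_eval_def power_add prod.distrib)

lemma smon_zero[simp]: "smon I (\<lambda>_. 0) v = 1" by (simp add: smon_def)
lemma mon_zero[simp]: "mon_eval m (\<lambda>_. 0) x = 1" by (simp add: mon_eval_def)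

lemma peval_append[simp]: "peval I m (p @ q) v x = peval I m p v x + peval I m q v x"
  by (simp add: peval_def)

lemma peval_Nil[simp]: "peval I m [] v x = 0" by (simp add: peval_def)

lemma peval_pmul[simp]: "peval I m (pmul p q) v x = peval I m p v x * peval I m q v x"
proof (induction p)
  case Nil then show ?case by (simp add: pmul_def)
next
  case (Cons a p)
  have "peval I m (map (\<lambda>b. (fst a * fst b, fst (snd a) + fst (snd b), snd (snd a) + snd (snd b))) q) v x
     = (fst a * smon I (fst (snd a)) v * mon_eval m (snd (snd a)) x) * peval I m q v x" for q
    by (induction q) (simp_all add: peval_def smon_add mon_add algebra_simps)
  then show ?case using Cons by (simp add: pmul_def peval_def algebra_simps)
qed

lemma peval_pconst[simp]: "peval I m (pconst c) v x = c" by (simp add: peval_def pconst_def)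

lemma peval_pvar[simp]: "j < m \<Longrightarrow> peval I m (pvar j) v x = x j"
proof -
  assume j: "j < m"
  have "mon_eval m ((\<lambda>_. 0)(j := 1)) x = (\<Prod>l<m. if l = j then x l else 1)"
    unfolding mon_eval_def by (intro prod.cong) auto
  also have "\<dots> = x j" using j by (simp add: prod.delta)
  finally show ?thesis by (simp add: peval_def pvar_def)
qed

lemma peval_psrc[simp]: "finite I \<Longrightarrow> s \<in> I \<Longrightarrow> peval I m (psrc s) v x = v s"
proof -
  assume I: "finite I" "s \<in> I"
  have "smon I ((\<lambda>_. 0)(s := 1)) v = (\<Prod>l\<in>I. if l = s then v l else 1)"
    unfolding smon_def by (intro prod.cong) auto
  also have "\<dots> = v s" using I by (simp add: prod.delta)
  finally show ?thesis by (simp add: peval_def psrc_def)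
qed

lemma peval_ppow[simp]: "peval I m (ppow p e) v x = peval I m p v x ^ e"
  by (induction e) auto

lemma peval_pmonp: "peval I m (pmonp e j a) v x = (\<Prod>l<j. peval I m (e l) v x ^ a l)"
  by (induction j) auto

lemma peval_psumk: "peval I m (psumk k f) v x = (\<Sum>l<k. peval I m (f l) v x)"
  by (induction k) auto

definition wt :: "nat \<Rightarrow> (nat \<Rightarrow> nat) \<Rightarrow> (nat \<Rightarrow> nat) \<Rightarrow> nat" where
  "wt m w b = (\<Sum>j<m. w j * b j)"

definition goodp :: "nat \<Rightarrow> (nat \<Rightarrow> nat) \<Rightarrow> mpoly \<Rightarrow> nat \<Rightarrow> bool" where
  "goodp m w p W \<longleftrightarrow> (\<forall>t\<in>set p. (\<forall>j\<ge>m. snd (snd t) j = 0) \<and> wt m w (snd (snd t)) \<le> W)"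

lemma goodp_mono: "goodp m w p W \<Longrightarrow> W \<le> W' \<Longrightarrow> goodp m w p W'"
  by (auto simp: goodp_def)

lemma goodp_append: "goodp m w p W \<Longrightarrow> goodp m w q W \<Longrightarrow> goodp m w (p @ q) W"
  by (auto simp: goodp_def)

lemma goodp_Nil: "goodp m w [] W" by (simp add: goodp_def)

lemma wt_add: "wt m w (\<lambda>s. b1 s + b2 s) = wt m w b1 + wt m w b2"
  by (simp add: wt_def algebra_simps sum.distrib)

lemma set_pmul: "t \<in> set (pmul p q) \<Longrightarrow> \<exists>a\<in>set p. \<exists>b\<in>set q. t = (fst a * fst b, \<lambda>s. fst (snd a) s + fst (snd b) s, \<lambda>s. snd (snd a) s + snd (snd b) s)"
  unfolding pmul_def plus_fun_def by auto

lemma goodp_pmul: "goodp m w p W1 \<Longrightarrow> goodp m w q W2 \<Longrightarrow> goodp m w (pmul p q) (W1 + W2)"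
  unfolding goodp_def
proof (intro ballI)
  fix t
  assume p: "\<forall>t\<in>set p. (\<forall>j\<ge>m. snd (snd t) j = 0) \<and> wt m w (snd (snd t)) \<le> W1"
    and q: "\<forall>t\<in>set q. (\<forall>j\<ge>m. snd (snd t) j = 0) \<and> wt m w (snd (snd t)) \<le> W2"
    and t: "t \<in> set (pmul p q)"
  from set_pmul[OF t] obtain a b where a: "a \<in> set p" and b: "b \<in> set q" and
    tt: "t = (fst a * fst b, \<lambda>s. fst (snd a) s + fst (snd b) s, \<lambda>s. snd (snd a) s + snd (snd b) s)" by blast
  from p a have 1: "(\<forall>j\<ge>m. snd (snd a) j = 0) \<and> wt m w (snd (snd a)) \<le> W1" by blast
  from q b have 2: "(\<forall>j\<ge>m. snd (snd b) j = 0) \<and> wt m w (snd (snd b)) \<le> W2" by blast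
  show "(\<forall>j\<ge>m. snd (snd t) j = 0) \<and> wt m w (snd (snd t)) \<le> W1 + W2"
    using 1 2 unfolding tt by (simp add: wt_add)
qed

lemma goodp_pconst: "goodp m w (pconst c) W" by (simp add: goodp_def pconst_def wt_def)
lemma goodp_psrc: "goodp m w (psrc s) W" by (simp add: goodp_def psrc_def wt_def)
lemma goodp_pvar: "j < m \<Longrightarrow> goodp m w (pvar j) (w j)"
proof -
  assume j: "j < m"
  have "wt m w ((\<lambda>_. 0)(j := 1)) = (\<Sum>l<m. if l = j then w l else 0)"
    unfolding wt_def by (intro sum.cong) auto
  also have "\<dots> = w j" using j by (simp add: sum.delta)
  finally show ?thesis using j by (auto simp: goodp_def pvar_def)
qed

lemma goodp_ppow: "goodp m w p W \<Longrightarrow> goodp m w (ppow p e) (e * W)"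
  by (induction e) (auto simp: goodp_pconst dest: goodp_pmul)

lemma goodp_pmonp: "(\<And>l. l < j \<Longrightarrow> goodp m w (e l) (w l)) \<Longrightarrow> goodp m w (pmonp e j a) (\<Sum>l<j. a l * w l)"
  by (induction j) (auto simp: goodp_pconst intro!: goodp_pmul goodp_ppow)

lemma goodp_psumk: "(\<And>l. l < k \<Longrightarrow> goodp m w (f l) W) \<Longrightarrow> goodp m w (psumk k f) W"
  by (induction k) (auto simp: goodp_Nil intro!: goodp_append)

definition Sidx :: "probloop \<Rightarrow> sidx set" where
  "Sidx L = SB ` {..<nvars L} \<union> (\<Union>i\<in>{..<nvars L}. \<Union>br. SC i br ` {..<length (pol L br i)})"

lemma finite_Sidx: "finite (Sidx L)"
  unfolding Sidx_def by (intro finite_UnI finite_UN_I) auto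

lemma SB_in: "i < nvars L \<Longrightarrow> SB i \<in> Sidx L" by (auto simp: Sidx_def)
lemma SC_in: "i < nvars L \<Longrightarrow> k < length (pol L br i) \<Longrightarrow> SC i br k \<in> Sidx L"
  by (auto simp: Sidx_def)

fun lift :: "nat \<Rightarrow> sidx \<Rightarrow> ridx" where
  "lift n (SB i) = Ch n i"
| "lift n (SC i br k) = Cf n i br k"

definition xi :: "(nat \<Rightarrow> nat \<Rightarrow> 'a \<Rightarrow> bool) \<Rightarrow> (nat \<Rightarrow> nat \<Rightarrow> bool \<Rightarrow> nat \<Rightarrow> 'a \<Rightarrow> real)
    \<Rightarrow> nat \<Rightarrow> 'a \<Rightarrow> sidx \<Rightarrow> real" where
  "xi B C n \<omega> s = src B C (lift n s) \<omega>"

definition ppol :: "probloop \<Rightarrow> bool \<Rightarrow> nat \<Rightarrow> (nat \<Rightarrow> mpoly) \<Rightarrow> mpoly" where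
  "ppol L br i e = psumk (length (pol L br i))
     (\<lambda>k. pmul (psrc (SC i br k)) (pmonp e (nvars L) (snd (pol L br i ! k))))"

definition updp :: "probloop \<Rightarrow> nat \<Rightarrow> (nat \<Rightarrow> mpoly) \<Rightarrow> mpoly" where
  "updp L i e = pmul (psrc (SB i)) (pmul (pconst (ca L i)) (e i) @ ppol L True i e) @
                pmul (pconst 1 @ pmul (pconst (-1)) (psrc (SB i))) (pmul (pconst (cb L i)) (e i) @ ppol L False i e)"

fun Ep :: "probloop \<Rightarrow> nat \<Rightarrow> nat \<Rightarrow> mpoly" where
  "Ep L 0 = (\<lambda>j. pvar j)"
| "Ep L (Suc i) = (Ep L i)(i := updp L i (Ep L i))"

lemma body_eval:
  "i \<le> nvars L \<Longrightarrow> j < nvars L \<Longrightarrow>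
   body L B C n \<omega> s i j = peval (Sidx L) (nvars L) (Ep L i j) (xi B C n \<omega>) s"
proof (induction i arbitrary: j)
  case 0 then show ?case by simp
next
  case (Suc i)
  let ?t = "body L B C n \<omega> s i"
  let ?e = "Ep L i"
  let ?pe = "\<lambda>p. peval (Sidx L) (nvars L) p (xi B C n \<omega>) s"
  have IH: "\<And>l. l < nvars L \<Longrightarrow> ?t l = ?pe (?e l)" using Suc by simp
  have i: "i < nvars L" using Suc by simp
  have mon: "mon_eval (nvars L) a ?t = (\<Prod>l<nvars L. ?pe (?e l) ^ a l)" for a
    unfolding mon_eval_def using IH by (intro prod.cong) auto
  have pp: "?pe (ppol L br i ?e) = poly_eval (nvars L) (pol L br i) (\<lambda>k. C n i br k \<omega>) ?t" for br
    unfolding ppol_def poly_eval_def peval_psumk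
    by (intro sum.cong refl) (simp add: finite_Sidx SC_in i peval_pmonp mon xi_def src_def)
  have sb: "?pe (psrc (SB i)) = of_bool (B n i \<omega>)"
    by (simp add: finite_Sidx SB_in i xi_def src_def)
  show ?case
  proof (cases "j = i")
    case True
    have "?pe (updp L i ?e) = (if B n i \<omega>
              then ca L i * ?t i + poly_eval (nvars L) (polP L i) (\<lambda>k. C n i True k \<omega>) ?t
              else cb L i * ?t i + poly_eval (nvars L) (polQ L i) (\<lambda>k. C n i False k \<omega>) ?t)"
      unfolding updp_def using pp[of True] pp[of False] sb IH[OF i]
      by (simp add: pol_def)
    then show ?thesis using True by (simp add: Let_def)
  next
    case False
    then show ?thesis using IH Suc.prems by (simp add: Let_def)
  qed
qed

definition Dg :: "probloop \<Rightarrow> nat" where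
  "Dg L = (\<Sum>i<nvars L. \<Sum>br\<in>UNIV. \<Sum>k<length (pol L br i). \<Sum>l<nvars L. snd (pol L br i ! k) l)"

definition wL :: "probloop \<Rightarrow> nat \<Rightarrow> nat" where
  "wL L j = (Dg L + 1) ^ j"

lemma deg_le_Dg:
  assumes "i < nvars L" "k < length (pol L br i)"
  shows "(\<Sum>l<nvars L. snd (pol L br i ! k) l) \<le> Dg L"
proof -
  let ?f = "\<lambda>i br k. \<Sum>l<nvars L. snd (pol L br i ! k) l"
  have "?f i br k \<le> (\<Sum>k<length (pol L br i). ?f i br k)"
    using assms by (intro member_le_sum) auto
  also have "\<dots> \<le> (\<Sum>br\<in>UNIV. \<Sum>k<length (pol L br i). ?f i br k)"
    by (intro member_le_sum [where f = "\<lambda>br. \<Sum>k<length (pol L br i). ?f i br k"]) auto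
  also have "\<dots> \<le> Dg L" unfolding Dg_def
    using assms by (intro member_le_sum [where f = "\<lambda>i. \<Sum>br\<in>UNIV. \<Sum>k<length (pol L br i). ?f i br k"]) auto
  finally show ?thesis .
qed

lemma wt_bound:
  fixes a :: "nat \<Rightarrow> nat" and D m i :: nat
  assumes "\<forall>l\<ge>i. a l = 0" "(\<Sum>l<m. a l) \<le> D"
  shows "(\<Sum>l<m. a l * (D + 1) ^ l) \<le> (D + 1) ^ i"
proof (cases i)
  case 0
  then have "\<forall>l. a l = 0" using assms by auto
  then show ?thesis by simp
next
  case (Suc i')
  have "(\<Sum>l<m. a l * (D + 1) ^ l) \<le> (\<Sum>l<m. a l * (D + 1) ^ i')"
  proof (intro sum_mono)
    fix l assume "l \<in> {..<m}"
    show "a l * (D + 1) ^ l \<le> a l * (D + 1) ^ i'"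
    proof (cases "l \<le> i'")
      case True then show ?thesis by (intro mult_left_mono power_increasing) auto
    next
      case False then show ?thesis using assms Suc by auto
    qed
  qed
  also have "\<dots> = (\<Sum>l<m. a l) * (D + 1) ^ i'" by (simp add: sum_distrib_right)
  also have "\<dots> \<le> D * (D + 1) ^ i'" using assms by (intro mult_right_mono) auto
  also have "\<dots> \<le> (D + 1) ^ i" using Suc by simp
  finally show ?thesis .
qed

lemma Ep_good:
  assumes ps: "prob_solvable L"
  shows "i \<le> nvars L \<Longrightarrow> j < nvars L \<Longrightarrow> goodp (nvars L) (wL L) (Ep L i j) (wL L j)"
proof (induction i arbitrary: j)
  case 0 then show ?case by (simp add: goodp_pvar)
next
  case (Suc i)
  have i: "i < nvars L" using Suc by simp
  have IH: "\<And>l. l < nvars L \<Longrightarrow> goodp (nvars L) (wL L) (Ep L i l) (wL L l)" using Suc by simp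
  have pp: "goodp (nvars L) (wL L) (ppol L br i (Ep L i)) (wL L i)" for br
    unfolding ppol_def
  proof (intro goodp_psumk)
    fix k assume k: "k < length (pol L br i)"
    let ?a = "snd (pol L br i ! k)"
    have z: "\<forall>l\<ge>i. ?a l = 0" using ps k i unfolding prob_solvable_def by blast
    have "(\<Sum>l<nvars L. ?a l * wL L l) \<le> wL L i"
      unfolding wL_def by (rule wt_bound[OF z deg_le_Dg[OF i k]])
    then have "goodp (nvars L) (wL L) (pmonp (Ep L i) (nvars L) ?a) (wL L i)"
      by (intro goodp_mono[OF goodp_pmonp]) (auto intro: IH)
    then show "goodp (nvars L) (wL L) (pmul (psrc (SC i br k)) (pmonp (Ep L i) (nvars L) ?a)) (wL L i)"
      using goodp_pmul[OF goodp_psrc[where W=0]] by fastforce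
  qed
  have g0: "goodp (nvars L) (wL L) (pmul (pconst c) (Ep L i i)) (wL L i)" for c
    using goodp_pmul[OF goodp_pconst[where W=0] IH[OF i]] by simp
  have A: "goodp (nvars L) (wL L) (pmul (pconst c) (Ep L i i) @ ppol L br i (Ep L i)) (wL L i)" for c br
    using g0 pp by (intro goodp_append)
  have B0: "goodp (nvars L) (wL L) (pconst 1 @ pmul (pconst (-1)) (psrc (SB i))) 0"
    using goodp_pmul[OF goodp_pconst[where W=0] goodp_psrc[where W=0]]
    by (intro goodp_append goodp_pconst) simp
  have u: "goodp (nvars L) (wL L) (updp L i (Ep L i)) (wL L i)"
    unfolding updp_def
    using goodp_pmul[OF goodp_psrc[where W=0] A] goodp_pmul[OF B0 A]
    by (intro goodp_append) simp_all
  show ?case using Suc.prems IH u by simp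
qed

lemma body_cong:
  assumes "\<forall>i<nvars L. B n i \<omega> = B' n i \<omega>'"
    and "\<forall>i<nvars L. \<forall>br k. k < length (pol L br i) \<longrightarrow> C n i br k \<omega> = C' n i br k \<omega>'"
  shows "i \<le> nvars L \<Longrightarrow> body L B C n \<omega> s i = body L B' C' n \<omega>' s i"
proof (induction i)
  case 0 then show ?case by simp
next
  case (Suc i)
  have i: "i < nvars L" using Suc by simp
  have pe: "poly_eval (nvars L) (polP L i) (\<lambda>k. C n i True k \<omega>) t =
        poly_eval (nvars L) (polP L i) (\<lambda>k. C' n i True k \<omega>') t"
       "poly_eval (nvars L) (polQ L i) (\<lambda>k. C n i False k \<omega>) t =
        poly_eval (nvars L) (polQ L i) (\<lambda>k. C' n i False k \<omega>') t" for t
    unfolding poly_eval_def using assms(2) i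
    by (auto intro!: sum.cong simp: pol_def split: if_splits)
  show ?case using Suc assms(1) i by (simp add: Let_def pe cong: if_cong)
qed

lemma loop_cong:
  assumes "\<forall>n'<n. \<forall>i<nvars L. B n' i \<omega> = B' n' i \<omega>' \<and>
              (\<forall>br k. k < length (pol L br i) \<longrightarrow> C n' i br k \<omega> = C' n' i br k \<omega>')"
  shows "loop_state L B C n \<omega> = loop_state L B' C' n \<omega>'"
  using assms
proof (induction n)
  case 0 then show ?case by simp
next
  case (Suc n)
  then have "loop_state L B C n \<omega> = loop_state L B' C' n \<omega>'" by simp
  moreover have "body L B C n \<omega> s (nvars L) = body L B' C' n \<omega>' s (nvars L)" for s
    using Suc.prems by (intro body_cong) auto
  ultimately show ?case by simp
qed

lemma body_meas:
  assumes B: "\<forall>i<nvars L. {x\<in>space N. B n i x} \<in> sets N"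
    and C: "\<forall>i<nvars L. \<forall>br k. k < length (pol L br i) \<longrightarrow> C n i br k \<in> borel_measurable N"
    and S: "\<forall>j. (\<lambda>x. S x j) \<in> borel_measurable N"
  shows "i \<le> nvars L \<Longrightarrow> \<forall>j. (\<lambda>x. body L B C n x (S x) i j) \<in> borel_measurable N"
proof (induction i)
  case 0 then show ?case using S by simp
next
  case (Suc i)
  have i: "i < nvars L" using Suc by simp
  let ?t = "\<lambda>x. body L B C n x (S x) i"
  have IH: "\<And>j. (\<lambda>x. ?t x j) \<in> borel_measurable N" using Suc by simp
  have pe: "(\<lambda>x. poly_eval (nvars L) (pol L br i) (\<lambda>k. C n i br k x) (?t x)) \<in> borel_measurable N" for br
    unfolding poly_eval_def mon_eval_def
    using C i IH by (intro borel_measurable_sum borel_measurable_times borel_measurable_prod borel_measurable_power) auto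
  have upd: "(\<lambda>x. if B n i x
              then ca L i * ?t x i + poly_eval (nvars L) (polP L i) (\<lambda>k. C n i True k x) (?t x)
              else cb L i * ?t x i + poly_eval (nvars L) (polQ L i) (\<lambda>k. C n i False k x) (?t x))
         \<in> borel_measurable N"
    using pe[of True] pe[of False] IH B i
    by (intro measurable_If borel_measurable_add borel_measurable_times) (auto simp: pol_def)
  show ?case
  proof
    fix j
    show "(\<lambda>x. body L B C n x (S x) (Suc i) j) \<in> borel_measurable N"
      using upd IH by (cases "j = i") (simp_all add: Let_def)
  qed
qed

definition Bv :: "nat \<Rightarrow> nat \<Rightarrow> (ridx \<Rightarrow> real) \<Rightarrow> bool" where
  "Bv n i v = (v (Ch n i) \<noteq> 0)"
definition Cv :: "nat \<Rightarrow> nat \<Rightarrow> bool \<Rightarrow> nat \<Rightarrow> (ridx \<Rightarrow> real) \<Rightarrow> real" where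
  "Cv n i br k v = v (Cf n i br k)"

fun iter :: "ridx \<Rightarrow> nat" where
  "iter (Ch n i) = n"
| "iter (Cf n i br k) = n"

definition Ln :: "probloop \<Rightarrow> nat \<Rightarrow> ridx set" where
  "Ln L n = {r \<in> src_idx L. iter r < n}"

lemma state_meas:
  "n \<le> n' \<Longrightarrow> (\<lambda>v. loop_state L Bv Cv n v j) \<in> borel_measurable (PiM (Ln L n') (\<lambda>_. borel))"
proof (induction n arbitrary: j)
  case 0 then show ?case by simp
next
  case (Suc n)
  let ?P = "PiM (Ln L n') (\<lambda>_. borel) :: (ridx \<Rightarrow> real) measure"
  have n: "n < n'" using Suc by simp
  have comp: "(\<lambda>v. v r) \<in> borel_measurable ?P" if "r \<in> Ln L n'" for r
    using measurable_component_singleton[OF that, of "\<lambda>_. borel"] by simp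
  have Bm: "\<forall>i<nvars L. {x\<in>space ?P. Bv n i x} \<in> sets ?P"
  proof (intro allI impI)
    fix i assume "i < nvars L"
    then have "Ch n i \<in> Ln L n'" using n by (auto simp: Ln_def src_idx_def)
    from comp[OF this] show "{x\<in>space ?P. Bv n i x} \<in> sets ?P"
      unfolding Bv_def by measurable
  qed
  have Cm: "\<forall>i<nvars L. \<forall>br k. k < length (pol L br i) \<longrightarrow> Cv n i br k \<in> borel_measurable ?P"
  proof (intro allI impI)
    fix i br k assume "i < nvars L" "k < length (pol L br i)"
    then have "Cf n i br k \<in> Ln L n'" using n by (auto simp: Ln_def src_idx_def)
    from comp[OF this] show "Cv n i br k \<in> borel_measurable ?P"
      unfolding Cv_def .
  qed
  have "\<forall>j. (\<lambda>x. body L Bv Cv n x (loop_state L Bv Cv n x) (nvars L) j) \<in> borel_measurable ?P"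
    using Suc n by (intro body_meas[where B=Bv and C=Cv and n=n and S="loop_state L Bv Cv n", OF Bm Cm]) auto
  then show ?case by simp
qed

fun unl :: "ridx \<Rightarrow> sidx" where
  "unl (Ch n i) = SB i"
| "unl (Cf n i br k) = SC i br k"

lemma unl_lift[simp]: "unl (lift n s) = s" by (cases s) auto
lemma iter_lift[simp]: "iter (lift n s) = n" by (cases s) auto
lemma inj_lift: "inj_on (lift n) A"
  by (rule inj_on_inverseI[where g = unl]) simp

fun mom :: "probloop \<Rightarrow> sidx \<Rightarrow> nat \<Rightarrow> real" where
  "mom L (SB i) e = (if e = 0 then 1 else pr L i)"
| "mom L (SC i br k) e = (\<integral>x. x ^ e \<partial>(fst (pol L br i ! k)))"

definition kappa :: "probloop \<Rightarrow> (sidx \<Rightarrow> nat) \<Rightarrow> real" where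
  "kappa L g = (\<Prod>s\<in>Sidx L. mom L s (g s))"

lemma lift_in_src: "s \<in> Sidx L \<Longrightarrow> lift n s \<in> src_idx L"
  by (auto simp: Sidx_def src_idx_def)

lemma src_moment:
  assumes P: "prob_space M" and S: "prob_solvable L" and LS: "loop_sources M L B C"
    and s: "s \<in> Sidx L"
  shows "integrable M (\<lambda>\<omega>. src B C (lift n s) \<omega> ^ e)"
    and "(\<integral>\<omega>. src B C (lift n s) \<omega> ^ e \<partial>M) = mom L s e"
proof -
  interpret prob_space M by fact
  have ind: "indep_vars (\<lambda>_. borel) (src B C) (src_idx L)" using LS by (simp add: loop_sources_def)
  have rv: "src B C (lift n s) \<in> borel_measurable M"
    using ind lift_in_src[OF s] by (auto simp: indep_vars_def)
  have "integrable M (\<lambda>\<omega>. src B C (lift n s) \<omega> ^ e) \<and>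
        (\<integral>\<omega>. src B C (lift n s) \<omega> ^ e \<partial>M) = mom L s e"
  proof (cases s)
    case (SB i)
    have i: "i < nvars L" using s SB by (auto simp: Sidx_def)
    have rvB: "(\<lambda>\<omega>. of_bool (B n i \<omega>) :: real) \<in> borel_measurable M"
      using rv SB by (simp add: src_def)
    have int: "integrable M (\<lambda>\<omega>. (of_bool (B n i \<omega>) :: real) ^ e)"
    proof (rule integrable_const_bound[where B=1])
      show "AE x in M. norm ((of_bool (B n i x) :: real) ^ e) \<le> 1"
        by (intro AE_I2) (cases e, auto)
      show "(\<lambda>\<omega>. (of_bool (B n i \<omega>) :: real) ^ e) \<in> borel_measurable M"
        using rvB by measurable
    qed
    have "(\<integral>\<omega>. (of_bool (B n i \<omega>) :: real) ^ e \<partial>M) = mom L (SB i) e"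
    proof (cases "e = 0")
      case True then show ?thesis by (simp add: prob_space)
    next
      case False
      have set: "{\<omega> \<in> space M. B n i \<omega>} \<in> sets M"
      proof -
        have "{\<omega> \<in> space M. B n i \<omega>} = (\<lambda>\<omega>. of_bool (B n i \<omega>) :: real) -` {1} \<inter> space M" by auto
        also have "\<dots> \<in> sets M" using rvB by measurable
        finally show ?thesis .
      qed
      have "(\<integral>\<omega>. (of_bool (B n i \<omega>) :: real) ^ e \<partial>M) = (\<integral>\<omega>. indicator {\<omega> \<in> space M. B n i \<omega>} \<omega> \<partial>M)"
        using False by (intro Bochner_Integration.integral_cong) (auto simp: indicator_def)
      also have "\<dots> = measure M {\<omega> \<in> space M. B n i \<omega>}"
        by (simp add: Int_absorb2)
      also have "\<dots> = pr L i" using LS i by (simp add: loop_sources_def)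
      finally show ?thesis using False by simp
    qed
    then show ?thesis using int SB by (simp add: src_def)
  next
    case (SC i br k)
    have ik: "i < nvars L" "k < length (pol L br i)" using s SC by (auto simp: Sidx_def)
    have rvC: "C n i br k \<in> borel_measurable M" using rv SC by (simp add: src_def)
    have d: "distr M borel (C n i br k) = fst (pol L br i ! k)" using LS ik by (simp add: loop_sources_def)
    have "integrable (fst (pol L br i ! k)) (\<lambda>x. x ^ e)" using S ik by (simp add: prob_solvable_def)
    then have int: "integrable M (\<lambda>\<omega>. C n i br k \<omega> ^ e)"
      using integrable_distr_eq[OF rvC, of "\<lambda>x. x ^ e"] d by simp
    have "(\<integral>\<omega>. C n i br k \<omega> ^ e \<partial>M) = (\<integral>x. x ^ e \<partial>(fst (pol L br i ! k)))"
      using integral_distr[OF rvC, of "\<lambda>x. x ^ e"] d by simp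
    then show ?thesis using int SC by (simp add: src_def)
  qed
  then show "integrable M (\<lambda>\<omega>. src B C (lift n s) \<omega> ^ e)"
    and "(\<integral>\<omega>. src B C (lift n s) \<omega> ^ e \<partial>M) = mom L s e" by auto
qed

lemma smon_moment:
  assumes P: "prob_space M" and S: "prob_solvable L" and LS: "loop_sources M L B C"
  shows "integrable M (\<lambda>\<omega>. smon (Sidx L) g (xi B C n \<omega>))"
    and "(\<integral>\<omega>. smon (Sidx L) g (xi B C n \<omega>) \<partial>M) = kappa L g"
proof -
  interpret prob_space M by fact
  have ind: "indep_vars (\<lambda>_. borel) (src B C) (src_idx L)" using LS by (simp add: loop_sources_def)
  let ?K = "lift n ` Sidx L"
  have K: "?K \<subseteq> src_idx L" using lift_in_src by blast
  have eq: "smon (Sidx L) g (xi B C n \<omega>) = (\<Prod>r\<in>?K. src B C r \<omega> ^ g (unl r))" for \<omega>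
    unfolding smon_def xi_def by (subst prod.reindex[OF inj_lift]) simp
  have ind2: "indep_vars (\<lambda>_. borel) (\<lambda>r \<omega>. src B C r \<omega> ^ g (unl r)) ?K"
    by (rule indep_vars_compose2[OF indep_vars_subset[OF ind K]]) simp
  have ints: "integrable M (\<lambda>\<omega>. src B C r \<omega> ^ g (unl r))" if "r \<in> ?K" for r
    using that src_moment(1)[OF P S LS] by auto
  show "integrable M (\<lambda>\<omega>. smon (Sidx L) g (xi B C n \<omega>))"
    unfolding eq by (rule indep_vars_integrable[OF _ ind2 ints]) (auto intro: finite_Sidx)
  have "(\<integral>\<omega>. smon (Sidx L) g (xi B C n \<omega>) \<partial>M) = (\<Prod>r\<in>?K. \<integral>\<omega>. src B C r \<omega> ^ g (unl r) \<partial>M)"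
    unfolding eq by (rule indep_vars_lebesgue_integral[OF _ ind2 ints]) (auto intro: finite_Sidx)
  also have "\<dots> = (\<Prod>s\<in>Sidx L. \<integral>\<omega>. src B C (lift n s) \<omega> ^ g s \<partial>M)"
    by (subst prod.reindex[OF inj_lift]) simp
  also have "\<dots> = kappa L g"
    unfolding kappa_def using src_moment(2)[OF P S LS] by (intro prod.cong) auto
  finally show "(\<integral>\<omega>. smon (Sidx L) g (xi B C n \<omega>) \<partial>M) = kappa L g" .
qed

lemma key:
  assumes P: "prob_space M" and S: "prob_solvable L" and LS: "loop_sources M L B C"
    and int: "integrable M (\<lambda>\<omega>. mon_eval (nvars L) b (loop_state L B C n \<omega>))"
  shows "integrable M (\<lambda>\<omega>. smon (Sidx L) g (xi B C n \<omega>) * mon_eval (nvars L) b (loop_state L B C n \<omega>))"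
    and "(\<integral>\<omega>. smon (Sidx L) g (xi B C n \<omega>) * mon_eval (nvars L) b (loop_state L B C n \<omega>) \<partial>M)
          = kappa L g * (\<integral>\<omega>. mon_eval (nvars L) b (loop_state L B C n \<omega>) \<partial>M)"
proof -
  interpret prob_space M by fact
  have ind: "indep_vars (\<lambda>_. borel) (src B C) (src_idx L)" using LS by (simp add: loop_sources_def)
  let ?K = "lift n ` Sidx L"
  let ?L = "Ln L n"
  have K: "?K \<subseteq> src_idx L" using lift_in_src by blast
  have Lsub: "?L \<subseteq> src_idx L" by (auto simp: Ln_def)
  have disj: "?K \<inter> ?L = {}" by (auto simp: Ln_def)
  have iv: "indep_var (PiM ?K (\<lambda>_. borel)) (\<lambda>\<omega>. restrict (\<lambda>r. src B C r \<omega>) ?K)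
                      (PiM ?L (\<lambda>_. borel)) (\<lambda>\<omega>. restrict (\<lambda>r. src B C r \<omega>) ?L)"
    by (rule indep_var_restrict[OF ind disj K Lsub])
  define f1 where "f1 v = (\<Prod>s\<in>Sidx L. (v (lift n s) :: real) ^ g s)" for v
  define f2 where "f2 v = mon_eval (nvars L) b (loop_state L Bv Cv n v)" for v
  have m1: "f1 \<in> borel_measurable (PiM ?K (\<lambda>_. borel))"
    unfolding f1_def
  proof (intro borel_measurable_prod borel_measurable_power)
    fix s assume "s \<in> Sidx L"
    then have "lift n s \<in> ?K" by blast
    from measurable_component_singleton[OF this, of "\<lambda>_. borel"]
    show "(\<lambda>v. v (lift n s)) \<in> borel_measurable (PiM ?K (\<lambda>_. borel))" by simp
  qed
  have m2: "f2 \<in> borel_measurable (PiM ?L (\<lambda>_. borel))"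
    unfolding f2_def mon_eval_def
    by (intro borel_measurable_prod borel_measurable_power state_meas) auto
  have iv2: "indep_var borel (f1 \<circ> (\<lambda>\<omega>. restrict (\<lambda>r. src B C r \<omega>) ?K))
                      borel (f2 \<circ> (\<lambda>\<omega>. restrict (\<lambda>r. src B C r \<omega>) ?L))"
    by (rule indep_var_compose[OF iv m1 m2])
  have e1: "f1 \<circ> (\<lambda>\<omega>. restrict (\<lambda>r. src B C r \<omega>) ?K) = (\<lambda>\<omega>. smon (Sidx L) g (xi B C n \<omega>))"
    by (rule ext) (simp add: f1_def smon_def xi_def)
  have e2: "f2 \<circ> (\<lambda>\<omega>. restrict (\<lambda>r. src B C r \<omega>) ?L) = (\<lambda>\<omega>. mon_eval (nvars L) b (loop_state L B C n \<omega>))"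
  proof (rule ext)
    fix \<omega>
    have "loop_state L Bv Cv n (restrict (\<lambda>r. src B C r \<omega>) ?L) = loop_state L B C n \<omega>"
    proof (rule loop_cong, intro allI impI conjI)
      fix n' i br k assume n': "n' < n" and i: "i < nvars L"
      have "Ch n' i \<in> ?L" using n' i by (auto simp: Ln_def src_idx_def)
      then show "Bv n' i (restrict (\<lambda>r. src B C r \<omega>) ?L) = B n' i \<omega>"
        by (simp add: Bv_def src_def)
      assume k: "k < length (pol L br i)"
      have "Cf n' i br k \<in> ?L" using n' i k by (auto simp: Ln_def src_idx_def)
      then show "Cv n' i br k (restrict (\<lambda>r. src B C r \<omega>) ?L) = C n' i br k \<omega>"
        by (simp add: Cv_def src_def)
    qed
    then show "(f2 \<circ> (\<lambda>\<omega>. restrict (\<lambda>r. src B C r \<omega>) ?L)) \<omega> = mon_eval (nvars L) b (loop_state L B C n \<omega>)"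
      by (simp add: f2_def)
  qed
  have iv3: "indep_var borel (\<lambda>\<omega>. smon (Sidx L) g (xi B C n \<omega>)) borel (\<lambda>\<omega>. mon_eval (nvars L) b (loop_state L B C n \<omega>))"
    using iv2 unfolding e1 e2 .
  show "integrable M (\<lambda>\<omega>. smon (Sidx L) g (xi B C n \<omega>) * mon_eval (nvars L) b (loop_state L B C n \<omega>))"
    by (rule indep_var_integrable[OF iv3 smon_moment(1)[OF P S LS] int])
  show "(\<integral>\<omega>. smon (Sidx L) g (xi B C n \<omega>) * mon_eval (nvars L) b (loop_state L B C n \<omega>) \<partial>M)
          = kappa L g * (\<integral>\<omega>. mon_eval (nvars L) b (loop_state L B C n \<omega>) \<partial>M)"
    by (subst indep_var_lebesgue_integral[OF iv3 smon_moment(1)[OF P S LS] int])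
       (simp add: smon_moment(2)[OF P S LS])
qed

definition Pb :: "probloop \<Rightarrow> (nat \<Rightarrow> nat) \<Rightarrow> mpoly" where
  "Pb L b = pmonp (Ep L (nvars L)) (nvars L) b"

lemma expand:
  "mon_eval (nvars L) b (loop_state L B C (Suc n) \<omega>) =
   peval (Sidx L) (nvars L) (Pb L b) (xi B C n \<omega>) (loop_state L B C n \<omega>)"
  unfolding Pb_def peval_pmonp mon_eval_def
  by (intro prod.cong refl) (simp add: body_eval)

lemma goodPb: "prob_solvable L \<Longrightarrow> goodp (nvars L) (wL L) (Pb L b) (wt (nvars L) (wL L) b)"
  unfolding Pb_def wt_def
  using goodp_pmonp[of "nvars L" "nvars L" "wL L" "Ep L (nvars L)" b] Ep_good[of L "nvars L"]
  by (simp add: mult.commute)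

lemma int_sum_list:
  assumes "\<forall>t\<in>set p. integrable M (f t)"
  shows "integrable M (\<lambda>\<omega>. \<Sum>t\<leftarrow>p. f t \<omega>) \<and> (\<integral>\<omega>. (\<Sum>t\<leftarrow>p. f t \<omega>) \<partial>M) = (\<Sum>t\<leftarrow>p. \<integral>\<omega>. f t \<omega> \<partial>M)"
  using assms
proof (induction p)
  case Nil then show ?case by simp
next
  case (Cons a p)
  then have ia: "integrable M (f a)" and ip: "integrable M (\<lambda>\<omega>. \<Sum>t\<leftarrow>p. f t \<omega>)"
    and ep: "(\<integral>\<omega>. (\<Sum>t\<leftarrow>p. f t \<omega>) \<partial>M) = (\<Sum>t\<leftarrow>p. \<integral>\<omega>. f t \<omega> \<partial>M)" by auto
  have "integrable M (\<lambda>\<omega>. f a \<omega> + (\<Sum>t\<leftarrow>p. f t \<omega>))" using ia ip by (rule Bochner_Integration.integrable_add)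
  moreover have "(\<integral>\<omega>. f a \<omega> + (\<Sum>t\<leftarrow>p. f t \<omega>) \<partial>M) = (\<integral>\<omega>. f a \<omega> \<partial>M) + (\<Sum>t\<leftarrow>p. \<integral>\<omega>. f t \<omega> \<partial>M)"
    using Bochner_Integration.integral_add[OF ia ip] ep by simp
  ultimately show ?case by simp
qed

lemma regroup:
  fixes a :: "'t \<Rightarrow> real"
  assumes "finite S" "\<forall>t\<in>set p. h t \<in> S"
  shows "(\<Sum>t\<leftarrow>p. a t * F (h t)) = (\<Sum>b\<in>S. (\<Sum>t\<leftarrow>p. if h t = b then a t else 0) * F b)"
  using assms(2)
proof (induction p)
  case Nil then show ?case by simp
next
  case (Cons x p)
  have hx: "h x \<in> S" using Cons by simp
  have "(\<Sum>b\<in>S. (if h x = b then a x else 0) * F b) = a x * F (h x)"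
  proof -
    have "(\<Sum>b\<in>S. (if h x = b then a x else 0) * F b) = (\<Sum>b\<in>S. if h x = b then a x * F b else 0)"
      by (intro sum.cong) auto
    also have "\<dots> = a x * F (h x)" using hx assms(1) by (simp add: sum.delta)
    finally show ?thesis .
  qed
  then show ?case using Cons by (simp add: distrib_right sum.distrib)
qed

lemma integrability:
  assumes P: "prob_space M" and S: "prob_solvable L" and LS: "loop_sources M L B C"
  shows "\<forall>b. (\<forall>j\<ge>nvars L. b j = 0) \<and> wt (nvars L) (wL L) b \<le> W \<longrightarrow>
           integrable M (\<lambda>\<omega>. mon_eval (nvars L) b (loop_state L B C n \<omega>))"
proof (induction n)
  case 0
  interpret prob_space M by fact
  show ?case by simp
next
  case (Suc n)
  show ?case
  proof (intro allI impI)
    fix b assume b: "(\<forall>j\<ge>nvars L. b j = 0) \<and> wt (nvars L) (wL L) b \<le> W"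
    have g: "goodp (nvars L) (wL L) (Pb L b) (wt (nvars L) (wL L) b)" using goodPb[OF S] .
    have "\<forall>t\<in>set (Pb L b). integrable M (\<lambda>\<omega>. fst t * smon (Sidx L) (fst (snd t)) (xi B C n \<omega>) *
             mon_eval (nvars L) (snd (snd t)) (loop_state L B C n \<omega>))"
    proof
      fix t assume t: "t \<in> set (Pb L b)"
      then have "(\<forall>j\<ge>nvars L. snd (snd t) j = 0) \<and> wt (nvars L) (wL L) (snd (snd t)) \<le> W"
        using g b unfolding goodp_def by fastforce
      then have "integrable M (\<lambda>\<omega>. mon_eval (nvars L) (snd (snd t)) (loop_state L B C n \<omega>))"
        using Suc by blast
      from Bochner_Integration.integrable_mult_right[OF key(1)[OF P S LS this], of "fst t"]
      show "integrable M (\<lambda>\<omega>. fst t * smon (Sidx L) (fst (snd t)) (xi B C n \<omega>) *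
             mon_eval (nvars L) (snd (snd t)) (loop_state L B C n \<omega>))"
        by (simp add: mult.assoc)
    qed
    from int_sum_list[OF this]
    show "integrable M (\<lambda>\<omega>. mon_eval (nvars L) b (loop_state L B C (Suc n) \<omega>))"
      unfolding expand peval_def by simp
  qed
qed


lemma finite_wt:
  "finite {b. (\<forall>j\<ge>m. b j = 0) \<and> wt m (wL L) b \<le> W}"
proof -
  have "{b. (\<forall>j\<ge>m. b j = 0) \<and> wt m (wL L) b \<le> W} \<subseteq>
        (\<lambda>f j. if j < m then f j else 0) ` (PiE {..<m} (\<lambda>_. {..W}))"
  proof
    fix b assume b: "b \<in> {b. (\<forall>j\<ge>m. b j = 0) \<and> wt m (wL L) b \<le> W}"
    have le: "b j \<le> W" if "j < m" for j
    proof -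
      have "b j \<le> wL L j * b j" unfolding wL_def by simp
      also have "\<dots> \<le> wt m (wL L) b" unfolding wt_def using that
        by (intro member_le_sum[where f = "\<lambda>j. wL L j * b j"]) auto
      finally show ?thesis using b by simp
    qed
    have "b = (\<lambda>j. if j < m then restrict b {..<m} j else 0)"
      using b by (auto simp: fun_eq_iff)
    moreover have "restrict b {..<m} \<in> PiE {..<m} (\<lambda>_. {..W})" using le by auto
    ultimately show "b \<in> (\<lambda>f j. if j < m then f j else 0) ` (PiE {..<m} (\<lambda>_. {..W}))" by blast
  qed
  moreover have "finite ((\<lambda>f j. if j < m then f j else 0) ` (PiE {..<m} (\<lambda>_. {..W})))"
    by (intro finite_imageI finite_PiE) auto
  ultimately show ?thesis by (rule finite_subset)
qed

theorem mainTheorem1: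
  fixes M :: "'a measure" and L :: probloop
    and B :: "nat \<Rightarrow> nat \<Rightarrow> 'a \<Rightarrow> bool" and C :: "nat \<Rightarrow> nat \<Rightarrow> bool \<Rightarrow> nat \<Rightarrow> 'a \<Rightarrow> real"
    and \<alpha> :: "nat \<Rightarrow> nat"
  assumes "prob_space M"
    and "prob_solvable L"
    and "loop_sources M L B C"
    and "\<forall>j \<ge> nvars L. \<alpha> j = 0"
  shows "\<exists>S :: (nat \<Rightarrow> nat) set. finite S \<and> \<alpha> \<in> S \<and>
           (\<forall>\<beta>\<in>S. \<forall>j \<ge> nvars L. \<beta> j = 0) \<and>
           (\<forall>\<beta>\<in>S. \<forall>n. integrable M (\<lambda>\<omega>. mon_eval (nvars L) \<beta> (loop_state L B C n \<omega>))) \<and>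
           (\<exists>c :: (nat \<Rightarrow> nat) \<Rightarrow> (nat \<Rightarrow> nat) \<Rightarrow> real. \<exists>d :: (nat \<Rightarrow> nat) \<Rightarrow> real.
              \<forall>\<beta>\<in>S. \<forall>n. Evar M L B C \<beta> (Suc n) = (\<Sum>\<beta>'\<in>S. c \<beta> \<beta>' * Evar M L B C \<beta>' n) + d \<beta>)"
proof -
  note P = assms(1) and PS = assms(2) and LS = assms(3)
  define W where "W = wt (nvars L) (wL L) \<alpha>"
  define S where "S = {b. (\<forall>j\<ge>nvars L. b j = 0) \<and> wt (nvars L) (wL L) b \<le> W}"
  define c where "c b b' = (\<Sum>t\<leftarrow>Pb L b. if snd (snd t) = b' then fst t * kappa L (fst (snd t)) else 0)" for b b'
  have fin: "finite S" unfolding S_def by (rule finite_wt)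
  have aS: "\<alpha> \<in> S" unfolding S_def W_def using assms(4) by simp
  have int: "\<forall>b\<in>S. \<forall>n. integrable M (\<lambda>\<omega>. mon_eval (nvars L) b (loop_state L B C n \<omega>))"
    using integrability[OF P PS LS] unfolding S_def by blast
  have rec: "Evar M L B C b (Suc n) = (\<Sum>b'\<in>S. c b b' * Evar M L B C b' n) + 0" if b: "b \<in> S" for b n
  proof -
    have g: "goodp (nvars L) (wL L) (Pb L b) (wt (nvars L) (wL L) b)" using goodPb[OF PS] .
    have inS: "\<forall>t\<in>set (Pb L b). snd (snd t) \<in> S"
      using g b unfolding goodp_def S_def by fastforce
    let ?f = "\<lambda>t \<omega>. fst t * smon (Sidx L) (fst (snd t)) (xi B C n \<omega>) *
             mon_eval (nvars L) (snd (snd t)) (loop_state L B C n \<omega>)"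
    have it: "integrable M (?f t) \<and> (\<integral>\<omega>. ?f t \<omega> \<partial>M) = fst t * kappa L (fst (snd t)) * Evar M L B C (snd (snd t)) n"
      if t: "t \<in> set (Pb L b)" for t
    proof -
      have i: "integrable M (\<lambda>\<omega>. mon_eval (nvars L) (snd (snd t)) (loop_state L B C n \<omega>))"
        using int inS t by blast
      have "?f t = (\<lambda>\<omega>. fst t * (smon (Sidx L) (fst (snd t)) (xi B C n \<omega>) *
             mon_eval (nvars L) (snd (snd t)) (loop_state L B C n \<omega>)))" by (simp add: mult.assoc fun_eq_iff)
      then show ?thesis
        using Bochner_Integration.integrable_mult_right[OF key(1)[OF P PS LS i], of "fst t"]
          key(2)[OF P PS LS i, of "fst (snd t)"]
        by (simp add: Evar_def)
    qed
    have "Evar M L B C b (Suc n) = (\<integral>\<omega>. (\<Sum>t\<leftarrow>Pb L b. ?f t \<omega>) \<partial>M)"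
      unfolding Evar_def expand peval_def ..
    also have "\<dots> = (\<Sum>t\<leftarrow>Pb L b. fst t * kappa L (fst (snd t)) * Evar M L B C (snd (snd t)) n)"
      using int_sum_list[of "Pb L b" M ?f] it by (simp cong: map_cong)
    also have "\<dots> = (\<Sum>b'\<in>S. c b b' * Evar M L B C b' n)"
      unfolding c_def by (rule regroup[OF fin inS])
    finally show ?thesis by simp
  qed
  have sup: "\<forall>b\<in>S. \<forall>j \<ge> nvars L. b j = 0" unfolding S_def by blast
  have "\<exists>c :: (nat \<Rightarrow> nat) \<Rightarrow> (nat \<Rightarrow> nat) \<Rightarrow> real. \<exists>d :: (nat \<Rightarrow> nat) \<Rightarrow> real.
              \<forall>b\<in>S. \<forall>n. Evar M L B C b (Suc n) = (\<Sum>b'\<in>S. c b b' * Evar M L B C b' n) + d b"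
    by (rule exI[of _ c], rule exI[of _ "\<lambda>_. 0"]) (use rec in blast)
  then show ?thesis using fin aS int sup by blast
qed

end
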